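(* Let $c_1>0$, $c_2>0$ and $k\in\mathbb{R}\setminus\{0\}$, and consider the system on $\mathbb{R}^3$ $$\dot z_1=\frac1{c_2}z_2z_3,\qquad \dot z_2=-\frac1{c_1}z_1z_3,\qquad \dot z_3=-\frac{k}{c_1}z_1 .$$ Let $$\Pi(z_1,z_2,z_3)=\begin{pmatrix}0&-\frac1kz_3&-1\\ \frac1kz_3&0&0\\ 1&0&0\end{pmatrix},\qquad \widetilde H(z)=-\frac{k}{2c_1}\Big(z_1^2+\frac{c_1}{c_2}z_2^2\Big),\qquad \widetilde C(z)=z_2-\frac1{2k}z_3^2 .$$ Then the system has the Hamilton-Poisson realization $(\mathbb{R}^3,\Pi,\widetilde H)$ with Casimir $\widetilde C$; that is, $\Pi$ defines a Poisson bracket $\{f,g\}=(\nabla f)^T\Pi\nabla g$ on $\mathbb{R}^3$, the system reads $\dot z=\Pi(z)\nabla\widetilde H(z)$, and $\{\widetilde C,f\}=0$ for all $f\in C^\infty(\mathbb{R}^3,\mathbb{R})$. *)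

theory Defs
  imports "HOL-Analysis.Analysis"
begin

definition partial :: "3 \<Rightarrow> (real^3 \<Rightarrow> real) \<Rightarrow> real^3 \<Rightarrow> real" where
  "partial i f z = frechet_derivative f (at z) (axis i 1)"

definition grad :: "(real^3 \<Rightarrow> real) \<Rightarrow> real^3 \<Rightarrow> real^3" where
  "grad f z = (\<chi> i. partial i f z)"

fun Ck :: "nat \<Rightarrow> (real^3 \<Rightarrow> real) \<Rightarrow> bool" where
  "Ck 0 f = continuous_on UNIV f"
| "Ck (Suc n) f = ((\<forall>z. f differentiable (at z)) \<and> (\<forall>i. Ck n (partial i f)))"

definition smooth :: "(real^3 \<Rightarrow> real) \<Rightarrow> bool" where
  "smooth f \<longleftrightarrow> (\<forall>n. Ck n f)"

definition bracket :: "(real^3 \<Rightarrow> real^3^3) \<Rightarrow> (real^3 \<Rightarrow> real) \<Rightarrow> (real^3 \<Rightarrow> real) \<Rightarrow> real^3 \<Rightarrow> real" where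
  "bracket P f g z = grad f z \<bullet> (P z *v grad g z)"

definition defines_poisson_bracket :: "(real^3 \<Rightarrow> real^3^3) \<Rightarrow> bool" where
  "defines_poisson_bracket P \<longleftrightarrow>
    (\<forall>f g h a b. smooth f \<and> smooth g \<and> smooth h \<longrightarrow>
       smooth (bracket P f g)
     \<and> bracket P (\<lambda>z. a * f z + b * g z) h = (\<lambda>z. a * bracket P f h z + b * bracket P g h z)
     \<and> bracket P f (\<lambda>z. a * g z + b * h z) = (\<lambda>z. a * bracket P f g z + b * bracket P f h z)
     \<and> bracket P f g = (\<lambda>z. - bracket P g f z)
     \<and> bracket P f (\<lambda>z. g z * h z) = (\<lambda>z. bracket P f g z * h z + g z * bracket P f h z)
     \<and> (\<forall>z. bracket P f (bracket P g h) z + bracket P g (bracket P h f) z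
              + bracket P h (bracket P f g) z = 0))"

definition sysF :: "real \<Rightarrow> real \<Rightarrow> real \<Rightarrow> real^3 \<Rightarrow> real^3" where
  "sysF c1 c2 k z = vector [(1/c2) * z$2 * z$3, -(1/c1) * z$1 * z$3, -(k/c1) * z$1]"

definition PiM :: "real \<Rightarrow> real^3 \<Rightarrow> real^3^3" where
  "PiM k z = vector [vector [0, -(1/k) * z$3, -1],
                     vector [(1/k) * z$3, 0, 0],
                     vector [1, 0, 0]]"

definition Htil :: "real \<Rightarrow> real \<Rightarrow> real \<Rightarrow> real^3 \<Rightarrow> real" where
  "Htil c1 c2 k z = -(k / (2*c1)) * ((z$1)^2 + (c1/c2) * (z$2)^2)"

definition Ctil :: "real \<Rightarrow> real^3 \<Rightarrow> real" where
  "Ctil k z = z$2 - (1/(2*k)) * (z$3)^2"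

end

theory Submission
  imports Defs
begin

lemma partial_eq:
  assumes "(f has_derivative f') (at z)"
  shows "partial i f z = f' (axis i 1)"
  using assms unfolding partial_def by (metis frechet_derivative_at)

lemma partial_works:
  assumes "f differentiable (at z)"
  shows "(f has_derivative frechet_derivative f (at z)) (at z)"
  using assms frechet_derivative_works by blast

lemma bracket_PiM:
  "bracket (PiM k) f g = (\<lambda>z. (z$3/k) * (partial 2 f z * partial 1 g z - partial 1 f z * partial 2 g z)
      + (partial 3 f z * partial 1 g z - partial 1 f z * partial 3 g z))"
  unfolding bracket_def grad_def PiM_def
  by (rule ext) (simp add: inner_vec_def matrix_vector_mult_def sum_3 algebra_simps)

lemma deriv_line:
  assumes "\<forall>x. f differentiable (at x)"
  shows "((\<lambda>u. f (a + u *\<^sub>R v)) has_real_derivative frechet_derivative f (at (a + u *\<^sub>R v)) v) (at u)"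
proof -
  let ?F = "frechet_derivative f (at (a + u *\<^sub>R v))"
  have d: "(f has_derivative ?F) (at (a + u *\<^sub>R v))" using assms partial_works by blast
  have l: "linear ?F" using d has_derivative_linear by blast
  have c: "((\<lambda>u. a + u *\<^sub>R v) has_derivative (\<lambda>h. h *\<^sub>R v)) (at u)"
    by (auto intro!: derivative_eq_intros)
  have "((\<lambda>u. f (a + u *\<^sub>R v)) has_derivative (\<lambda>h. ?F (h *\<^sub>R v))) (at u)"
    using has_derivative_compose[OF c d] by (simp add: o_def)
  moreover have "(\<lambda>h. ?F (h *\<^sub>R v)) = (*) (?F v)"
    by (rule ext) (simp add: linear_scale[OF l] mult.commute)
  ultimately show ?thesis unfolding has_field_derivative_def by simp
qed

lemma deriv_line_partial:
  assumes "\<forall>x. f differentiable (at x)"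
  shows "((\<lambda>u. f (a + u *\<^sub>R axis i 1)) has_real_derivative partial i f (a + u *\<^sub>R axis i 1)) (at u)"
  using deriv_line[OF assms, of a "axis i 1" u] unfolding partial_def .

lemma schwarz_aux:
  fixes f :: "real^3 \<Rightarrow> real"
  assumes df: "\<forall>x. f differentiable (at x)" and dp: "\<forall>x. partial i f differentiable (at x)"
    and s: "s > 0" and t: "t > 0"
  shows "\<exists>\<sigma> \<tau>. 0 < \<sigma> \<and> \<sigma> < s \<and> 0 < \<tau> \<and> \<tau> < t \<and>
    f (z + s *\<^sub>R axis i 1 + t *\<^sub>R axis j 1) - f (z + s *\<^sub>R axis i 1) - f (z + t *\<^sub>R axis j 1) + f z
      = s * t * partial j (partial i f) (z + \<sigma> *\<^sub>R axis i 1 + \<tau> *\<^sub>R axis j 1)"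
proof -
  define ei :: "real^3" where "ei = axis i 1"
  define ej :: "real^3" where "ej = axis j 1"
  define \<phi> where "\<phi> u = f ((z + t *\<^sub>R ej) + u *\<^sub>R ei) - f (z + u *\<^sub>R ei)" for u
  have "\<And>u. 0 \<le> u \<Longrightarrow> u \<le> s \<Longrightarrow> (\<phi> has_real_derivative
      (partial i f ((z + t *\<^sub>R ej) + u *\<^sub>R ei) - partial i f (z + u *\<^sub>R ei))) (at u)"
    unfolding \<phi>_def ei_def
    by (auto intro!: DERIV_diff deriv_line_partial df)
  from MVT2[OF s this] obtain \<sigma> where \<sigma>: "0 < \<sigma>" "\<sigma> < s"
    and e1: "\<phi> s - \<phi> 0 = (s - 0) * (partial i f ((z + t *\<^sub>R ej) + \<sigma> *\<^sub>R ei) - partial i f (z + \<sigma> *\<^sub>R ei))"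
    by blast
  define \<psi> where "\<psi> v = partial i f ((z + \<sigma> *\<^sub>R ei) + v *\<^sub>R ej)" for v
  have "\<And>v. 0 \<le> v \<Longrightarrow> v \<le> t \<Longrightarrow> (\<psi> has_real_derivative
      partial j (partial i f) ((z + \<sigma> *\<^sub>R ei) + v *\<^sub>R ej)) (at v)"
    unfolding \<psi>_def ej_def
    by (auto intro!: deriv_line_partial dp)
  from MVT2[OF t this] obtain \<tau> where \<tau>: "0 < \<tau>" "\<tau> < t"
    and e2: "\<psi> t - \<psi> 0 = (t - 0) * partial j (partial i f) ((z + \<sigma> *\<^sub>R ei) + \<tau> *\<^sub>R ej)"
    by blast
  have "f (z + s *\<^sub>R ei + t *\<^sub>R ej) - f (z + s *\<^sub>R ei) - f (z + t *\<^sub>R ej) + f z = \<phi> s - \<phi> 0"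
    unfolding \<phi>_def by (simp add: add_ac)
  also have "\<dots> = s * (\<psi> t - \<psi> 0)"
    using e1 unfolding \<psi>_def by (simp add: add_ac)
  also have "\<dots> = s * t * partial j (partial i f) (z + \<sigma> *\<^sub>R ei + \<tau> *\<^sub>R ej)"
    using e2 by simp
  finally show ?thesis using \<sigma> \<tau> unfolding ei_def ej_def by blast
qed

lemma schwarz:
  fixes f :: "real^3 \<Rightarrow> real"
  assumes df: "\<forall>x. f differentiable (at x)"
    and di: "\<forall>x. partial i f differentiable (at x)"
    and dj: "\<forall>x. partial j f differentiable (at x)"
    and ci: "continuous_on UNIV (partial j (partial i f))"
    and cj: "continuous_on UNIV (partial i (partial j f))"
  shows "partial j (partial i f) z = partial i (partial j f) z"
proof -
  let ?A = "partial j (partial i f)" and ?B = "partial i (partial j f)"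
  have "\<bar>?A z - ?B z\<bar> < e" if e: "e > 0" for e
  proof -
    have "isCont ?A z" using ci by (simp add: continuous_on_eq_continuous_at)
    then obtain d1 where d1: "d1 > 0" "\<And>x. dist x z < d1 \<Longrightarrow> dist (?A x) (?A z) < e/2"
      using e unfolding continuous_at_eps_delta by (meson half_gt_zero)
    have "isCont ?B z" using cj by (simp add: continuous_on_eq_continuous_at)
    then obtain d2 where d2: "d2 > 0" "\<And>x. dist x z < d2 \<Longrightarrow> dist (?B x) (?B z) < e/2"
      using e unfolding continuous_at_eps_delta by (meson half_gt_zero)
    define h where "h = min d1 d2 / 3"
    have h: "h > 0" using d1 d2 h_def by simp
    obtain \<sigma> \<tau> where st: "0 < \<sigma>" "\<sigma> < h" "0 < \<tau>" "\<tau> < h" and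
      E1: "f (z + h *\<^sub>R axis i 1 + h *\<^sub>R axis j 1) - f (z + h *\<^sub>R axis i 1) - f (z + h *\<^sub>R axis j 1) + f z
      = h * h * ?A (z + \<sigma> *\<^sub>R axis i 1 + \<tau> *\<^sub>R axis j 1)"
      using schwarz_aux[OF df di h h, of z j] by blast
    obtain \<sigma>' \<tau>' where st': "0 < \<sigma>'" "\<sigma>' < h" "0 < \<tau>'" "\<tau>' < h" and
      E2: "f (z + h *\<^sub>R axis j 1 + h *\<^sub>R axis i 1) - f (z + h *\<^sub>R axis j 1) - f (z + h *\<^sub>R axis i 1) + f z
      = h * h * ?B (z + \<sigma>' *\<^sub>R axis j 1 + \<tau>' *\<^sub>R axis i 1)"
      using schwarz_aux[OF df dj h h, of z i] by blast
    have "h * h * ?A (z + \<sigma> *\<^sub>R axis i 1 + \<tau> *\<^sub>R axis j 1) = h * h * ?B (z + \<sigma>' *\<^sub>R axis j 1 + \<tau>' *\<^sub>R axis i 1)"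
    proof -
      have "z + h *\<^sub>R axis j 1 + h *\<^sub>R axis i 1 = z + h *\<^sub>R axis i 1 + h *\<^sub>R (axis j 1 :: real^3)"
        by (simp add: algebra_simps)
      then have "f (z + h *\<^sub>R axis j 1 + h *\<^sub>R axis i 1) = f (z + h *\<^sub>R axis i 1 + h *\<^sub>R (axis j 1 :: real^3))"
        by (metis (no_types))
      then show ?thesis using E1 E2 by linarith
    qed
    hence eq: "?A (z + \<sigma> *\<^sub>R axis i 1 + \<tau> *\<^sub>R axis j 1) = ?B (z + \<sigma>' *\<^sub>R axis j 1 + \<tau>' *\<^sub>R axis i 1)"
      using h by simp
    have n1: "dist (z + \<sigma> *\<^sub>R axis i 1 + \<tau> *\<^sub>R axis j 1) z < d1"
    proof -
      have "dist (z + \<sigma> *\<^sub>R axis i 1 + \<tau> *\<^sub>R axis j 1) z = norm (\<sigma> *\<^sub>R axis i 1 + \<tau> *\<^sub>R (axis j 1::real^3))"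
        by (simp add: dist_norm)
      also have "\<dots> \<le> norm (\<sigma> *\<^sub>R (axis i 1::real^3)) + norm (\<tau> *\<^sub>R (axis j 1::real^3))" by (rule norm_triangle_ineq)
      also have "\<dots> = \<sigma> + \<tau>" using st by simp
      also have "\<dots> < d1" using st h_def d1 d2 by simp
      finally show ?thesis .
    qed
    have n2: "dist (z + \<sigma>' *\<^sub>R axis j 1 + \<tau>' *\<^sub>R axis i 1) z < d2"
    proof -
      have "dist (z + \<sigma>' *\<^sub>R axis j 1 + \<tau>' *\<^sub>R axis i 1) z = norm (\<sigma>' *\<^sub>R axis j 1 + \<tau>' *\<^sub>R (axis i 1::real^3))"
        by (simp add: dist_norm)
      also have "\<dots> \<le> norm (\<sigma>' *\<^sub>R (axis j 1::real^3)) + norm (\<tau>' *\<^sub>R (axis i 1::real^3))" by (rule norm_triangle_ineq)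
      also have "\<dots> = \<sigma>' + \<tau>'" using st' by simp
      also have "\<dots> < d2" using st' h_def d1 d2 by simp
      finally show ?thesis .
    qed
    have a1: "\<bar>?A (z + \<sigma> *\<^sub>R axis i 1 + \<tau> *\<^sub>R axis j 1) - ?A z\<bar> < e/2"
      using d1(2)[OF n1] unfolding dist_real_def .
    have a2: "\<bar>?B (z + \<sigma>' *\<^sub>R axis j 1 + \<tau>' *\<^sub>R axis i 1) - ?B z\<bar> < e/2"
      using d2(2)[OF n2] unfolding dist_real_def .
    have gen: "\<And>a b c d::real. a = b \<Longrightarrow> \<bar>a - c\<bar> < e/2 \<Longrightarrow> \<bar>b - d\<bar> < e/2 \<Longrightarrow> \<bar>c - d\<bar> < e"
      unfolding abs_less_iff by linarith
    show ?thesis using gen[OF eq a1 a2] .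
  qed
  then show ?thesis
  proof -
    assume H: "\<And>e. e > 0 \<Longrightarrow> \<bar>?A z - ?B z\<bar> < e"
    show ?thesis
    proof (rule ccontr)
      assume "?A z \<noteq> ?B z"
      then have "\<bar>?A z - ?B z\<bar> > 0" by simp
      from H[OF this] show False by simp
    qed
  qed
qed

lemma Ck_mono: "Ck (Suc n) f \<Longrightarrow> Ck n f"
proof (induction n arbitrary: f)
  case 0
  then show ?case by (auto intro: differentiable_imp_continuous_on simp: differentiable_on_def
        differentiable_at_withinI)
next
  case (Suc n)
  then show ?case by simp
qed

lemma partial_add:
  assumes "f differentiable (at z)" "g differentiable (at z)"
  shows "partial i (\<lambda>z. f z + g z) z = partial i f z + partial i g z"
  using assms by (intro partial_eq[THEN trans]) (auto intro!: derivative_eq_intros partial_works simp: partial_def)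

lemma partial_cmul:
  assumes "f differentiable (at z)"
  shows "partial i (\<lambda>z. c * f z) z = c * partial i f z"
  using assms by (intro partial_eq[THEN trans]) (auto intro!: derivative_eq_intros partial_works simp: partial_def)

lemma partial_mult:
  assumes "f differentiable (at z)" "g differentiable (at z)"
  shows "partial i (\<lambda>z. f z * g z) z = partial i f z * g z + f z * partial i g z"
  using assms by (intro partial_eq[THEN trans]) (auto intro!: derivative_eq_intros partial_works simp: partial_def)

lemma partial_const: "partial i (\<lambda>z. c) z = 0"
  by (rule partial_eq[THEN trans]) (auto intro!: derivative_eq_intros)

lemma coord_deriv: "((\<lambda>z::real^3. z$j) has_derivative (\<lambda>h. h$j)) (at z)"
  using bounded_linear_vec_nth bounded_linear_imp_has_derivative by blast

lemma partial_coord: "partial i (\<lambda>z. z$j) z = (if j = i then 1 else 0)"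
  by (rule partial_eq[OF coord_deriv, THEN trans]) (simp add: axis_def)

lemma Ck_const: "Ck n (\<lambda>z. c)"
proof (induction n arbitrary: c)
  case 0 then show ?case by simp
next
  case (Suc n)
  have "partial i (\<lambda>z. c) = (\<lambda>z. 0)" for i by (rule ext) (rule partial_const)
  then show ?case using Suc by simp
qed

lemma Ck_coord: "Ck n (\<lambda>z. z$j)"
proof (cases n)
  case 0 then show ?thesis by (simp add: continuous_on_component continuous_on_id)
next
  case (Suc m)
  have "partial i (\<lambda>z. z$j) = (\<lambda>z. (if j = i then 1 else 0))" for i by (rule ext) (rule partial_coord)
  then show ?thesis using Suc Ck_const by (auto simp: differentiable_def intro: coord_deriv)
qed

lemma Ck_add: "Ck n f \<Longrightarrow> Ck n g \<Longrightarrow> Ck n (\<lambda>z. f z + g z)"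
proof (induction n arbitrary: f g)
  case 0 then show ?case by (auto intro: continuous_intros)
next
  case (Suc n)
  have "partial i (\<lambda>z. f z + g z) = (\<lambda>z. partial i f z + partial i g z)" for i
    using Suc.prems by (intro ext partial_add) auto
  then show ?case using Suc by auto
qed

lemma Ck_cmul: "Ck n f \<Longrightarrow> Ck n (\<lambda>z. c * f z)"
proof (induction n arbitrary: f)
  case 0 then show ?case by (auto intro: continuous_intros)
next
  case (Suc n)
  have "partial i (\<lambda>z. c * f z) = (\<lambda>z. c * partial i f z)" for i
    using Suc.prems by (intro ext partial_cmul) auto
  then show ?case using Suc by auto
qed

lemma Ck_mult: "Ck n f \<Longrightarrow> Ck n g \<Longrightarrow> Ck n (\<lambda>z. f z * g z)"
proof (induction n arbitrary: f g)
  case 0 then show ?case by (auto intro: continuous_intros)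
next
  case (Suc n)
  have "partial i (\<lambda>z. f z * g z) = (\<lambda>z. partial i f z * g z + f z * partial i g z)" for i
    using Suc.prems by (intro ext partial_mult) auto
  moreover have "Ck n f" "Ck n g" using Suc.prems Ck_mono by auto
  ultimately show ?case using Suc by (auto intro!: Ck_add)
qed

lemma smooth_const: "smooth (\<lambda>z. c)" by (simp add: smooth_def Ck_const)
lemma smooth_coord: "smooth (\<lambda>z. z$j)" by (simp add: smooth_def Ck_coord)
lemma smooth_add: "smooth f \<Longrightarrow> smooth g \<Longrightarrow> smooth (\<lambda>z. f z + g z)" by (simp add: smooth_def Ck_add)
lemma smooth_cmul: "smooth f \<Longrightarrow> smooth (\<lambda>z. c * f z)" by (simp add: smooth_def Ck_cmul)
lemma smooth_mult: "smooth f \<Longrightarrow> smooth g \<Longrightarrow> smooth (\<lambda>z. f z * g z)" by (simp add: smooth_def Ck_mult)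
lemma smooth_diff: "smooth f \<Longrightarrow> smooth g \<Longrightarrow> smooth (\<lambda>z. f z - g z)"
  using smooth_add[of f "\<lambda>z. (-1) * g z"] smooth_cmul[of g "-1"] by simp
lemma smooth_partial: "smooth f \<Longrightarrow> smooth (partial i f)"
  unfolding smooth_def by (metis Ck.simps(2))
lemma smooth_differentiable: "smooth f \<Longrightarrow> f differentiable (at z)"
  unfolding smooth_def by (metis Ck.simps(2))

lemma partial_diff:
  assumes "f differentiable (at z)" "g differentiable (at z)"
  shows "partial i (\<lambda>z. f z - g z) z = partial i f z - partial i g z"
  using assms by (intro partial_eq[THEN trans]) (auto intro!: derivative_eq_intros partial_works simp: partial_def)

lemma smooth_z3k: "smooth (\<lambda>z. z$3 / k)"
  using smooth_cmul[OF smooth_coord, of "1/k" 3] by simp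

lemma partial_z3k: "partial i (\<lambda>z. z$3 / k) z = (if i = 3 then 1/k else 0)"
proof -
  have "partial i (\<lambda>z. (1/k) * z$3) z = (1/k) * partial i (\<lambda>z. z$3) z"
    by (rule partial_cmul) (auto simp: differentiable_def intro: coord_deriv)
  then show ?thesis by (simp add: partial_coord)
qed

lemmas smooth_rules = smooth_add smooth_mult smooth_diff smooth_cmul smooth_partial smooth_coord smooth_const smooth_z3k

lemma smooth_bracket: "smooth f \<Longrightarrow> smooth g \<Longrightarrow> smooth (bracket (PiM k) f g)"
  unfolding bracket_PiM by (intro smooth_rules)

lemma partial_bracket:
  assumes "smooth g" "smooth h"
  shows "partial i (bracket (PiM k) g h) z =
    (if i = 3 then 1/k else 0) * (partial 2 g z * partial 1 h z - partial 1 g z * partial 2 h z)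
    + (z$3/k) * (partial i (partial 2 g) z * partial 1 h z + partial 2 g z * partial i (partial 1 h) z
                - partial i (partial 1 g) z * partial 2 h z - partial 1 g z * partial i (partial 2 h) z)
    + (partial i (partial 3 g) z * partial 1 h z + partial 3 g z * partial i (partial 1 h) z
                - partial i (partial 1 g) z * partial 3 h z - partial 1 g z * partial i (partial 3 h) z)"
  unfolding bracket_PiM
  using assms
  apply (simp only: partial_add partial_mult partial_diff partial_z3k smooth_differentiable smooth_rules)
  by (simp add: algebra_simps)

lemma smooth_sym:
  assumes "smooth f"
  shows "partial j (partial i f) z = partial i (partial j f) z"
proof -
  have c2: "Ck (Suc (Suc 0)) f" using assms smooth_def by blast
  show ?thesis
    using c2 by (intro schwarz) auto
qed

lemma bracket_PiM_at:
  "bracket (PiM k) f g z = (z$3/k) * (partial 2 f z * partial 1 g z - partial 1 f z * partial 2 g z)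
      + (partial 3 f z * partial 1 g z - partial 1 f z * partial 3 g z)"
  by (simp add: bracket_PiM)

lemma Htil_eq: "Htil c1 c2 k = (\<lambda>z. (-(k/(2*c1))) * (z$1*z$1 + (c1/c2)*(z$2*z$2)))"
  by (rule ext) (simp add: Htil_def power2_eq_square)

lemma Ctil_eq: "Ctil k = (\<lambda>z. z$2 - (1/(2*k))*(z$3*z$3))"
  by (rule ext) (simp add: Ctil_def power2_eq_square)

lemma smooth_Htil: "smooth (Htil c1 c2 k)"
  unfolding Htil_eq by (intro smooth_rules)

lemma smooth_Ctil: "smooth (Ctil k)"
  unfolding Ctil_eq by (intro smooth_rules)

lemma partial_Htil: "partial i (Htil c1 c2 k) z =
   (-(k/(2*c1))) * ((if 1 = i then 1 else 0) * z$1 + z$1 * (if 1 = i then 1 else 0)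
     + (c1/c2) * ((if 2 = i then 1 else 0) * z$2 + z$2 * (if 2 = i then 1 else 0)))"
  unfolding Htil_eq
  by (simp only: partial_add partial_mult partial_cmul partial_coord partial_const smooth_differentiable smooth_rules) simp

lemma partial_Ctil: "partial i (Ctil k) z =
   (if 2 = i then 1 else 0) - (1/(2*k)) * ((if 3 = i then 1 else 0) * z$3 + z$3 * (if 3 = i then 1 else 0))"
  unfolding Ctil_eq
  by (simp only: partial_diff partial_mult partial_cmul partial_coord partial_const smooth_differentiable smooth_rules)

lemma partial_lin:
  assumes "smooth f" "smooth g"
  shows "partial i (\<lambda>z. a * f z + b * g z) z = a * partial i f z + b * partial i g z"
  using assms by (simp only: partial_add partial_cmul smooth_differentiable smooth_rules)

lemma partial_prod:
  assumes "smooth f" "smooth g"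
  shows "partial i (\<lambda>z. f z * g z) z = partial i f z * g z + f z * partial i g z"
  using assms by (simp only: partial_mult smooth_differentiable)

theorem proposition5p4:
  fixes c1 c2 k :: real
  assumes "c1 > 0" and "c2 > 0" and "k \<noteq> 0"
  shows "defines_poisson_bracket (PiM k)
       \<and> smooth (Htil c1 c2 k) \<and> smooth (Ctil k)
       \<and> (\<forall>z. sysF c1 c2 k z = PiM k z *v grad (Htil c1 c2 k) z)
       \<and> (\<forall>f. smooth f \<longrightarrow> (\<forall>z. bracket (PiM k) (Ctil k) f z = 0))"
proof (intro conjI allI impI)
  show "smooth (Htil c1 c2 k)" by (rule smooth_Htil)
  show "smooth (Ctil k)" by (rule smooth_Ctil)
  show "sysF c1 c2 k z = PiM k z *v grad (Htil c1 c2 k) z" for z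
    using assms
    by (simp add: sysF_def PiM_def grad_def vec_eq_iff forall_3 matrix_vector_mult_def sum_3
        partial_Htil field_simps)
  show "bracket (PiM k) (Ctil k) f z = 0" for f z
    using assms
    by (simp add: bracket_PiM_at partial_Ctil field_simps)
  show "defines_poisson_bracket (PiM k)"
    unfolding defines_poisson_bracket_def
  proof (intro allI impI conjI)
    fix f g h :: "real^3 \<Rightarrow> real" and a b :: real
    assume H: "smooth f \<and> smooth g \<and> smooth h"
    then have sf: "smooth f" and sg: "smooth g" and sh: "smooth h" by auto
    show "smooth (bracket (PiM k) f g)" using sf sg by (rule smooth_bracket)
    show "bracket (PiM k) (\<lambda>z. a * f z + b * g z) h = (\<lambda>z. a * bracket (PiM k) f h z + b * bracket (PiM k) g h z)"
      by (rule ext) (simp add: bracket_PiM_at partial_lin[OF sf sg] algebra_simps)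
    show "bracket (PiM k) f (\<lambda>z. a * g z + b * h z) = (\<lambda>z. a * bracket (PiM k) f g z + b * bracket (PiM k) f h z)"
      by (rule ext) (simp add: bracket_PiM_at partial_lin[OF sg sh] algebra_simps)
    show "bracket (PiM k) f g = (\<lambda>z. - bracket (PiM k) g f z)"
      by (rule ext) (simp add: bracket_PiM_at algebra_simps)
    show "bracket (PiM k) f (\<lambda>z. g z * h z) = (\<lambda>z. bracket (PiM k) f g z * h z + g z * bracket (PiM k) f h z)"
      by (rule ext) (simp add: bracket_PiM_at partial_prod[OF sg sh] algebra_simps)
    fix z
    show "bracket (PiM k) f (bracket (PiM k) g h) z + bracket (PiM k) g (bracket (PiM k) h f) z
              + bracket (PiM k) h (bracket (PiM k) f g) z = 0"
      apply (simp only: bracket_PiM_at[of k _ "bracket (PiM k) _ _"] partial_bracket sf sg sh)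
      apply (simp only: smooth_sym[OF sf, of 2 1] smooth_sym[OF sf, of 3 1] smooth_sym[OF sf, of 3 2]
          smooth_sym[OF sg, of 2 1] smooth_sym[OF sg, of 3 1] smooth_sym[OF sg, of 3 2]
          smooth_sym[OF sh, of 2 1] smooth_sym[OF sh, of 3 1] smooth_sym[OF sh, of 3 2])
      by (simp add: algebra_simps)
  qed
qed

end
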